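(* Let $n\ge 3$ and let $f=x^n+a_{n-1}x^{n-1}+\cdots+a_1x+a_0$ with complex coefficients, with roots $r_1,\ldots,r_n$ over $\mathbb{C}$ (listed with multiplicity). Let \[D_2=\prod_{\substack{1\le i,j,k\le n\\ i<j,\ j\ne k,\ k\ne i}}(2r_k-r_i-r_j).\] For each integer $m$ put $\varphi_m(x)=f^{(m)}(x)/m!$ if $1\le m\le n$ and $\varphi_m=0$ if $m\le 0$ or $m>n$, where $f^{(m)}$ is the $m$th derivative of $f$ with respect to $x$. Let $M$ be the infinite matrix whose entries, for $s\ge 1$ and $l\ge 1$, are \[M_{2s-1,\,l}=\varphi_{2(l-s)+2},\qquad M_{2s,\,l}=\varphi_{2(l-s)+1},\] so that its rows are $(\varphi_2,\varphi_4,\varphi_6,\ldots)$, $(\varphi_1,\varphi_3,\varphi_5,\ldots)$, $(0,\varphi_2,\varphi_4,\ldots)$, $(0,\varphi_1,\varphi_3,\ldots)$, $(0,0,\varphi_2,\ldots)$, etc. Let $H=H(x)$ be the $(n-2)$th leading principal minor of $M$ (the determinant of its upper-left $(n-2)\times(n-2)$ block). Then \[D_2=\operatorname{res}(f,H,x),\] the Sylvester resultant of $f$ and $H$ with respect to $x$.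
   Context: $f^{(m)}$ denotes the $m$th derivative of $f$ with respect to $x$; $\operatorname{res}(\cdot,\cdot,x)$ is the Sylvester resultant with respect to $x$. *)

theory Defs
  imports Complex_Main "Subresultants.Resultant_Prelim"
begin

definition phi :: "complex poly \<Rightarrow> int \<Rightarrow> complex poly" where
  "phi f m = (if 1 \<le> m \<and> m \<le> int (degree f)
              then smult (1 / fact (nat m)) ((pderiv ^^ nat m) f) else 0)"

definition Mentry :: "complex poly \<Rightarrow> nat \<Rightarrow> nat \<Rightarrow> complex poly" where
  "Mentry f r l = (if odd r then phi f (2 * (int l - int ((r + 1) div 2)) + 2)
                   else phi f (2 * (int l - int (r div 2)) + 1))"

definition leading_minor :: "complex poly \<Rightarrow> nat \<Rightarrow> complex poly" where
  "leading_minor f k = det (mat k k (\<lambda>(i, j). Mentry f (i + 1) (j + 1)))"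

end

theory Submission
  imports Defs
begin

definition pm :: "nat \<Rightarrow> (nat \<Rightarrow> complex poly) \<Rightarrow> complex mat" where
  "pm N P = mat N N (\<lambda>(i,j). coeff (P i) (N - 1 - j))"

lemma sylv_pm:
  assumes "degree p \<le> m" "degree q \<le> d"
  shows "sylvester_mat_sub m d p q = pm (m+d) (\<lambda>i. if i < d then monom 1 (d-1-i) * p else monom 1 (m+d-1-i) * q)"
  unfolding sylvester_mat_sub_def pm_def
proof (rule eq_matI, goal_cases)
  case (1 i j)
  show ?case
  proof (cases "i < d")
    case True
    then show ?thesis using 1 assms
      by (auto simp: coeff_monom_mult intro!: coeff_eq_0)
  next
    case False
    then show ?thesis using 1 assms
      by (auto simp: coeff_monom_mult intro!: coeff_eq_0)
  qed
qed auto

lemma det_single_col: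
  assumes A: "A \<in> carrier_mat N N" and j: "j < N" and i: "i < N"
    and z: "\<And>i'. i' < N \<Longrightarrow> i' \<noteq> i \<Longrightarrow> A $$ (i', j) = 0"
  shows "det A = A $$ (i, j) * cofactor A i j"
proof -
  have "det A = (\<Sum>i'<N. A $$ (i',j) * cofactor A i' j)"
    by (rule laplace_expansion_column[OF A j])
  also have "\<dots> = A $$ (i, j) * cofactor A i j + (\<Sum>i'\<in>{..<N} - {i}. A $$ (i',j) * cofactor A i' j)"
    using i by (subst sum.remove[of _ i]) auto
  also have "(\<Sum>i'\<in>{..<N} - {i}. A $$ (i',j) * cofactor A i' j) = 0"
    using z by (intro sum.neutral) auto
  finally show ?thesis by simp
qed

lemma det_single_row:
  assumes A: "A \<in> carrier_mat N N" and j: "j < N" and i: "i < N"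
    and z: "\<And>j'. j' < N \<Longrightarrow> j' \<noteq> j \<Longrightarrow> A $$ (i, j') = 0"
  shows "det A = A $$ (i, j) * cofactor A i j"
proof -
  have "det A = (\<Sum>j'<N. A $$ (i,j') * cofactor A i j')"
    by (rule laplace_expansion_row[OF A i])
  also have "\<dots> = A $$ (i, j) * cofactor A i j + (\<Sum>j'\<in>{..<N} - {j}. A $$ (i,j') * cofactor A i j')"
    using j by (subst sum.remove[of _ j]) auto
  also have "(\<Sum>j'\<in>{..<N} - {j}. A $$ (i,j') * cofactor A i j') = 0"
    using z by (intro sum.neutral) auto
  finally show ?thesis by simp
qed

lemma det_ut1:
  assumes "\<And>i j. i < N \<Longrightarrow> j < i \<Longrightarrow> g (i,j) = 0" "\<And>i. i < N \<Longrightarrow> g (i,i) = (1::'a::comm_ring_1)"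
  shows "det (mat N N g) = 1"
proof -
  have "det (mat N N g) = prod_list (diag_mat (mat N N g))"
    by (rule det_upper_triangular) (use assms in \<open>auto simp: upper_triangular_def\<close>)
  also have "\<dots> = 1" unfolding prod_list_diag_prod using assms by (auto intro!: prod.neutral)
  finally show ?thesis .
qed

lemma det_lt1:
  assumes "\<And>i j. j < N \<Longrightarrow> i < j \<Longrightarrow> g (i,j) = 0" "\<And>i. i < N \<Longrightarrow> g (i,i) = (1::'a::comm_ring_1)"
  shows "det (mat N N g) = 1"
proof -
  have "det (mat N N g) = prod_list (diag_mat (mat N N g))"
    by (rule det_lower_triangular[of N]) (use assms in \<open>auto\<close>)
  also have "\<dots> = 1" unfolding prod_list_diag_prod using assms by (auto intro!: prod.neutral)
  finally show ?thesis .
qed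

lemma sum_two_r:
  fixes X :: "nat \<Rightarrow> 'a::comm_ring_1"
  assumes "i < N"
  shows "(\<Sum>k\<in>{0..<N}. (if k = i then 1 else if k = Suc i \<and> c then b else 0) * X k)
    = X i + (if Suc i < N \<and> c then b * X (Suc i) else 0)"
proof -
  have "(\<Sum>k\<in>{0..<N}. (if k = i then 1 else if k = Suc i \<and> c then b else 0) * X k)
     = (\<Sum>k\<in>{0..<N}. (if k = i then X k else 0)) + (\<Sum>k\<in>{0..<N}. (if k = Suc i then (if c then b * X k else 0) else 0))"
    by (subst sum.distrib[symmetric]) (rule sum.cong, auto)
  also have "\<dots> = X i + (if Suc i < N \<and> c then b * X (Suc i) else 0)"
    using assms by (simp add: sum.delta)
  finally show ?thesis .
qed

lemma sum_two_c:
  fixes X :: "nat \<Rightarrow> 'a::comm_ring_1"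
  assumes "j < N"
  shows "(\<Sum>k\<in>{0..<N}. X k * (if k = j then 1 else if j = Suc k then b else 0))
    = X j + (if 0 < j then b * X (j - 1) else 0)"
proof -
  have "(\<Sum>k\<in>{0..<N}. X k * (if k = j then 1 else if j = Suc k then b else 0))
     = (\<Sum>k\<in>{0..<N}. (if k = j then X k else 0)) + (\<Sum>k\<in>{0..<N}. (if k = j - 1 then (if 0 < j then b * X k else 0) else 0))"
    by (subst sum.distrib[symmetric]) (rule sum.cong, auto)
  also have "\<dots> = X j + (if 0 < j then b * X (j - 1) else 0)"
    using assms by (simp add: sum.delta)
  finally show ?thesis .
qed


lemma pm_rowop:
  fixes P :: "nat \<Rightarrow> complex poly"
  shows "pm N (\<lambda>i. if d \<le> i \<and> Suc i < N then P i - smult a (P (Suc i)) else P i)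
    = mat N N (\<lambda>(i,k). if k = i then 1 else if k = Suc i \<and> d \<le> i then -a else 0) * pm N P"
proof (rule eq_matI)
  fix i j assume ij: "i < dim_row (mat N N (\<lambda>(i,k). if k = i then 1 else if k = Suc i \<and> d \<le> i then -a else 0) * pm N P)"
    "j < dim_col (mat N N (\<lambda>(i,k). if k = i then 1 else if k = Suc i \<and> d \<le> i then -a else 0) * pm N P)"
  hence i: "i < N" and j: "j < N" by (auto simp: pm_def)
  have "(mat N N (\<lambda>(i,k). if k = i then 1 else if k = Suc i \<and> d \<le> i then -a else 0) * pm N P) $$ (i,j)
    = (\<Sum>k\<in>{0..<N}. (if k = i then 1 else if k = Suc i \<and> d \<le> i then -a else 0) * coeff (P k) (N - 1 - j))"
    using i j by (auto simp: pm_def scalar_prod_def intro!: sum.cong)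
  also have "\<dots> = coeff (P i) (N - 1 - j) + (if Suc i < N \<and> d \<le> i then -a * coeff (P (Suc i)) (N - 1 - j) else 0)"
    by (rule sum_two_r[OF i])
  finally show "pm N (\<lambda>i. if d \<le> i \<and> Suc i < N then P i - smult a (P (Suc i)) else P i) $$ (i, j) =
         (mat N N (\<lambda>(i,k). if k = i then 1 else if k = Suc i \<and> d \<le> i then -a else 0) * pm N P) $$ (i, j)"
    using i j by (auto simp: pm_def)
qed (auto simp: pm_def)

lemma pm_synth:
  fixes P Q :: "nat \<Rightarrow> complex poly"
  assumes PQ: "\<And>i. i < N \<Longrightarrow> P i = [:-a,1:] * Q i + [:c i:]"
    and deg: "\<And>i e. i < N \<Longrightarrow> N - 1 \<le> e \<Longrightarrow> coeff (Q i) e = 0"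
  shows "pm N P = mat N N (\<lambda>(i,j). if j < N - 1 then coeff (Q i) (N - 2 - j) else c i)
     * mat N N (\<lambda>(k,j). if k = j then 1 else if j = Suc k then -a else 0)"
proof (rule eq_matI)
  let ?M = "mat N N (\<lambda>(i,j). if j < N - 1 then coeff (Q i) (N - 2 - j) else c i)"
  let ?U = "mat N N (\<lambda>(k,j). if k = j then 1 else if j = Suc k then -a else (0::complex))"
  fix i j assume ij: "i < dim_row (?M * ?U)" "j < dim_col (?M * ?U)"
  hence i: "i < N" and j: "j < N" by auto
  have "(?M * ?U) $$ (i,j) = (\<Sum>k\<in>{0..<N}. ?M $$ (i,k) * (if k = j then 1 else if j = Suc k then -a else 0))"
    using i j by (auto simp: scalar_prod_def intro!: sum.cong)
  also have "\<dots> = ?M $$ (i,j) + (if 0 < j then -a * ?M $$ (i, j - 1) else 0)"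
    by (rule sum_two_c[OF j])
  also have "\<dots> = coeff (P i) (N - 1 - j)"
  proof -
    have cP: "coeff (P i) e = (if e = 0 then c i else coeff (Q i) (e - 1)) - a * coeff (Q i) e" for e
      using PQ[OF i] by (auto simp: coeff_pCons')
    show ?thesis
    proof (cases "j < N - 1")
      case True
      then show ?thesis using i j deg[OF i, of "N - 1"] unfolding cP
        by (cases j) (auto simp: Suc_diff_Suc numeral_2_eq_2)
    next
      case False
      hence jN: "j = N - 1" using j by auto
      show ?thesis
      proof (cases "j = 0")
        case True
        then show ?thesis using jN i j deg[OF i, of 0] unfolding cP by auto
      next
        case False
        then show ?thesis using jN i unfolding cP by auto
      qed
    qed
  qed
  finally show "pm N P $$ (i, j) = (?M * ?U) $$ (i, j)" using i j by (auto simp: pm_def)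
qed (auto simp: pm_def)


lemma sylv_step:
  fixes p1 q :: "complex poly"
  assumes dp: "degree p1 \<le> m" and dq: "degree q \<le> d"
  shows "det (sylvester_mat_sub (Suc m) d ([:-a,1:] * p1) q) = poly q a * det (sylvester_mat_sub m d p1 q)"
proof -
  define N where "N = Suc m + d"
  define p where "p = [:-a,1:] * p1"
  have dpp: "degree p \<le> Suc m" unfolding p_def
    using degree_mult_le[of "[:-a,1:]" p1] dp by auto
  define P where "P = (\<lambda>i. if i < d then monom 1 (d-1-i) * p else monom 1 (N-1-i) * q)"
  define P' where "P' = (\<lambda>i. if d \<le> i \<and> Suc i < N then P i - smult a (P (Suc i)) else P i)"
  define Q where "Q = (\<lambda>i. if i < d then monom 1 (d-1-i) * p1 else if Suc i < N then monom 1 (N-2-i) * q else synthetic_div q a)"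
  define c where "c = (\<lambda>i. if Suc i < N then 0 else poly q a)"
  define L where "L = mat N N (\<lambda>(i,k). if k = i then 1 else if k = Suc i \<and> d \<le> i then -a else (0::complex))"
  define U where "U = mat N N (\<lambda>(k,j). if k = j then 1 else if j = Suc k then -a else (0::complex))"
  define M where "M = mat N N (\<lambda>(i,j). if j < N - 1 then coeff (Q i) (N - 2 - j) else c i)"
  have S: "sylvester_mat_sub (Suc m) d p q = pm N P"
    unfolding P_def N_def by (rule sylv_pm[OF dpp dq])
  have detL: "det L = 1" unfolding L_def by (rule det_ut1) auto
  have detU: "det U = 1" unfolding U_def by (rule det_ut1) auto
  have "pm N P' = L * pm N P" unfolding P'_def L_def by (rule pm_rowop)
  hence d1: "det (pm N P') = det (pm N P)"
    using det_mult[of L N "pm N P"] detL by (auto simp: L_def pm_def)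
  have PQ: "P' i = [:-a,1:] * Q i + [:c i:]" if i: "i < N" for i
  proof -
    consider "i < d" | "d \<le> i" "Suc i < N" | "Suc i = N" using i by linarith
    then show ?thesis
    proof cases
      case 1
      then show ?thesis unfolding P'_def P_def Q_def c_def p_def N_def by (auto simp: algebra_simps)
    next
      case 2
      have e: "N - 1 - i = Suc (N - 2 - i)" and e2: "N - 1 - Suc i = N - 2 - i" using 2 by auto
      have "monom (1::complex) (N - 1 - i) * q - smult a (monom 1 (N - 1 - Suc i) * q)
         = [:-a,1:] * (monom 1 (N-2-i) * q)"
        unfolding e e2 by (simp add: monom_Suc algebra_simps)
      then show ?thesis using 2 unfolding P'_def P_def Q_def c_def by auto
    next
      case 3
      then show ?thesis unfolding P'_def P_def Q_def c_def N_def
        using synthetic_div_correct'[of a q] by auto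
    qed
  qed
  have degQ: "coeff (Q i) e = 0" if i: "i < N" and e: "N - 1 \<le> e" for i e
  proof -
    consider "i < d" | "d \<le> i" "Suc i < N" | "Suc i = N" using i by linarith
    then show ?thesis
    proof cases
      case 1
      have "degree (monom (1::complex) (d-1-i) * p1) \<le> (d-1-i) + m"
        using degree_mult_le[of "monom (1::complex) (d-1-i)" p1] degree_monom_le[of "1::complex" "d-1-i"] dp by linarith
      then show ?thesis using 1 e unfolding Q_def N_def by (auto intro!: coeff_eq_0)
    next
      case 2
      have "degree (monom (1::complex) (N-2-i) * q) \<le> (N-2-i) + d"
        using degree_mult_le[of "monom (1::complex) (N-2-i)" q] degree_monom_le[of "1::complex" "N-2-i"] dq by linarith
      then show ?thesis using 2 e unfolding Q_def N_def by (auto intro!: coeff_eq_0)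
    next
      case 3
      show ?thesis
      proof (cases "degree q = 0")
        case True
        then show ?thesis using 3 unfolding Q_def N_def by (simp add: synthetic_div_eq_0_iff[THEN iffD2])
      next
        case False
        then show ?thesis using 3 e dq unfolding Q_def N_def
          by (auto intro!: coeff_eq_0 simp: degree_synthetic_div)
      qed
    qed
  qed
  have "pm N P' = M * U" unfolding M_def U_def by (rule pm_synth[OF PQ degQ])
  hence d2: "det (pm N P') = det M"
    using det_mult[of M N U] detU by (auto simp: M_def U_def)
  have N1: "N - 1 < N" unfolding N_def by auto
  have d3: "det M = M $$ (N-1, N-1) * cofactor M (N-1) (N-1)"
    by (rule det_single_col[OF _ N1 N1]) (auto simp: M_def c_def)
  have MD: "mat_delete M (N-1) (N-1) = sylvester_mat_sub m d p1 q"
    unfolding sylv_pm[OF dp dq]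
    by (rule eq_matI) (auto simp: M_def mat_delete_def pm_def Q_def N_def)
  have "det (sylvester_mat_sub (Suc m) d p q) = det M" using S d1 d2 by simp
  also have "\<dots> = poly q a * det (sylvester_mat_sub m d p1 q)"
    unfolding d3 cofactor_def MD by (simp add: M_def c_def N_def)
  finally show ?thesis unfolding p_def .
qed


lemma degree_lin_prod: "finite I \<Longrightarrow> degree (\<Prod>i\<in>I. [:- (r i :: complex), 1:]) = card I"
  by (subst degree_prod_sum_eq) auto

lemma sylv_prod:
  fixes q :: "complex poly"
  assumes "finite I" and dq: "degree q \<le> d"
  shows "det (sylvester_mat_sub (card I) d (\<Prod>i\<in>I. [:- r i, 1:]) q) = (\<Prod>i\<in>I. poly q (r i))"
  using assms(1)
proof (induction I rule: finite_induct)
  case empty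
  have "sylvester_mat_sub 0 d 1 q = 1\<^sub>m d"
    by (rule eq_matI) (auto simp: sylvester_mat_sub_def)
  then show ?case by simp
next
  case (insert x F)
  have "det (sylvester_mat_sub (card (insert x F)) d (\<Prod>i\<in>insert x F. [:- r i, 1:]) q)
    = det (sylvester_mat_sub (Suc (card F)) d ([:- r x, 1:] * (\<Prod>i\<in>F. [:- r i, 1:])) q)"
    using insert by simp
  also have "\<dots> = poly q (r x) * det (sylvester_mat_sub (card F) d (\<Prod>i\<in>F. [:- r i, 1:]) q)"
    by (rule sylv_step) (use insert dq degree_lin_prod[of F r] in auto)
  finally show ?case using insert by simp
qed

lemma resultant_lin_prod:
  fixes g :: "complex poly"
  assumes "finite I"
  shows "resultant (\<Prod>i\<in>I. [:- r i, 1:]) g = (\<Prod>i\<in>I. poly g (r i))"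
  unfolding resultant_def sylvester_mat_def degree_lin_prod[OF assms]
  by (rule sylv_prod[OF assms order_refl])


definition cf :: "complex poly \<Rightarrow> int \<Rightarrow> complex" where
  "cf h z = (if z < 0 then 0 else coeff h (nat z))"

definition hur :: "complex poly \<Rightarrow> nat \<Rightarrow> complex" where
  "hur h k = det (mat k k (\<lambda>(i,j). cf h (2 * int j - int i + 1)))"

lemma cf_lin: "cf ([:-t,1:] * h) z = cf h (z - 1) - t * cf h z"
proof -
  consider "z < 0" | "z = 0" | "z > 0" by linarith
  then show ?thesis
  proof cases
    case 3
    then have "nat z = Suc (nat (z - 1))" by auto
    then show ?thesis using 3 by (simp add: cf_def coeff_pCons')
  qed (auto simp: cf_def)
qed

lemma key_sum:
  assumes dh: "degree h \<le> N" and m: "odd m"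
  shows "(\<Sum>k\<in>{0..N}. (-1)^k * coeff h k * cf h (int m - int k)) = 0"
proof -
  define g where "g = (\<lambda>k. (-1)^k * coeff h k * cf h (int m - int k))"
  have "(\<Sum>k\<in>{0..N}. g k) = (\<Sum>k\<in>{0..N+m}. g k)"
    by (rule sum.mono_neutral_left) (use dh in \<open>auto simp: g_def coeff_eq_0\<close>)
  also have "\<dots> = (\<Sum>k\<in>{0..m}. g k)"
    by (rule sum.mono_neutral_right) (auto simp: g_def cf_def)
  finally have S: "(\<Sum>k\<in>{0..N}. g k) = (\<Sum>k\<in>{0..m}. g k)" .
  have "(\<Sum>k\<in>{0..m}. g k) = (\<Sum>k\<in>{0..m}. g (m + 0 - k))"
    by (rule sum.atLeastAtMost_rev)
  also have "\<dots> = (\<Sum>k\<in>{0..m}. - g k)"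
  proof (rule sum.cong)
    fix k assume k: "k \<in> {0..m}"
    have "(-1::complex)^(m-k) * (-1)^k = (-1)^m" using k by (simp add: power_add[symmetric])
    also have "\<dots> = -1" using m by simp
    finally have e1: "(-1::complex)^(m-k) * (-1)^k = -1" .
    have e2: "(-1::complex)^k * (-1)^k = 1" by (simp add: power_add[symmetric])
    have pw: "(-1::complex)^(m-k) = - ((-1)^k)"
    proof -
      have "(-1::complex)^(m-k) = (-1)^(m-k) * ((-1)^k * (-1)^k)" using e2 by simp
      also have "\<dots> = ((-1)^(m-k) * (-1)^k) * (-1)^k" by (simp only: mult.assoc)
      also have "\<dots> = - ((-1)^k)" using e1 by simp
      finally show ?thesis .
    qed
    have "cf h (int m - int (m - k)) = coeff h k" using k by (simp add: cf_def of_nat_diff)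
    moreover have "coeff h (m - k) = cf h (int m - int k)" using k by (simp add: cf_def of_nat_diff nat_diff_distrib)
    ultimately show "g (m + 0 - k) = - g k" unfolding g_def using pw by (simp add: algebra_simps)
  qed simp
  also have "\<dots> = - (\<Sum>k\<in>{0..m}. g k)" by (simp add: sum_negf)
  finally have "(\<Sum>k\<in>{0..m}. g k) = 0" by simp
  with S show ?thesis unfolding g_def by simp
qed


lemma sum_two_l:
  fixes X :: "nat \<Rightarrow> 'a::comm_ring_1"
  assumes "i < N"
  shows "(\<Sum>k\<in>{0..<N}. (if k = i then 1 else if Suc k = i then b else 0) * X k)
    = X i + (if 0 < i then b * X (i - 1) else 0)"
proof -
  have "(\<Sum>k\<in>{0..<N}. (if k = i then 1 else if Suc k = i then b else 0) * X k)
     = (\<Sum>k\<in>{0..<N}. (if k = i then X k else 0)) + (\<Sum>k\<in>{0..<N}. (if k = i - 1 then (if 0 < i then b * X k else 0) else 0))"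
    by (subst sum.distrib[symmetric]) (rule sum.cong, auto)
  also have "\<dots> = X i + (if 0 < i then b * X (i - 1) else 0)"
    using assms by (simp add: sum.delta)
  finally show ?thesis .
qed

lemma hur_drop:
  assumes dh: "degree h = N" and lc: "coeff h N = 1" and N: "N \<ge> 1"
  shows "hur h N = hur h (N - 1)"
proof -
  let ?A = "mat N N (\<lambda>(i,j). cf h (2 * int j - int i + 1))"
  have N1: "N - 1 < N" using N by auto
  have "det ?A = ?A $$ (N-1, N-1) * cofactor ?A (N-1) (N-1)"
  proof (rule det_single_col[OF _ N1 N1])
    fix i' assume i': "i' < N" "i' \<noteq> N - 1"
    have "nat (2 * int (N - 1) - int i' + 1) > degree h" using i' dh by auto
    then show "?A $$ (i', N - 1) = 0" using i' N by (auto simp: cf_def coeff_eq_0)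
  qed auto
  also have "?A $$ (N-1, N-1) = 1" using N lc by (auto simp: cf_def of_nat_diff)
  also have "cofactor ?A (N-1) (N-1) = hur h (N - 1)"
    unfolding cofactor_def hur_def
    by (simp add: power_add[symmetric] mult_2[symmetric], rule arg_cong[where f = det], rule eq_matI, auto simp: mat_delete_def)
  finally show ?thesis unfolding hur_def by simp
qed


lemma hur_step:
  assumes dh: "degree h = N" and lc: "coeff h N = 1" and N: "N \<ge> 1"
  shows "hur ([:-t,1:] * h) N = poly h (-t) * hur h (N - 1)"
proof -
  define h' where "h' = [:-t,1:] * h"
  define B where "B = mat (Suc N) (Suc N) (\<lambda>(i,j). if j < N then cf h (2 * int j - int i + 1) else t^i)"
  define L1 where "L1 = mat (Suc N) (Suc N) (\<lambda>(i,k). if k = i then 1 else if Suc k = i then -t else (0::complex))"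
  define L2 where "L2 = mat (Suc N) (Suc N) (\<lambda>(i,k). if i < N then (if k = i then 1 else 0) else (-1)^k * coeff h k)"
  have Bc: "B \<in> carrier_mat (Suc N) (Suc N)" unfolding B_def by auto
  have L1c: "L1 \<in> carrier_mat (Suc N) (Suc N)" unfolding L1_def by auto
  have L2c: "L2 \<in> carrier_mat (Suc N) (Suc N)" unfolding L2_def by auto
  have detL1: "det L1 = 1" unfolding L1_def by (rule det_lt1) auto
  have detL2: "det L2 = (-1)^N"
  proof -
    have "det L2 = prod_list (diag_mat L2)"
      by (rule det_lower_triangular[OF _ L2c]) (auto simp: L2_def)
    also have "\<dots> = (\<Prod>i\<in>{0..<Suc N}. L2 $$ (i,i))" unfolding prod_list_diag_prod by (simp add: L2_def)
    also have "\<dots> = (\<Prod>i\<in>{0..<N}. L2 $$ (i,i)) * L2 $$ (N,N)" by simp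
    also have "(\<Prod>i\<in>{0..<N}. L2 $$ (i,i)) = 1" by (rule prod.neutral) (auto simp: L2_def)
    also have "L2 $$ (N,N) = (-1)^N" using lc by (simp add: L2_def)
    finally show ?thesis by simp
  qed
  have L1B: "(L1 * B) $$ (i,j) = B $$ (i,j) + (if 0 < i then -t * B $$ (i - 1, j) else 0)"
    if i: "i < Suc N" and j: "j < Suc N" for i j
  proof -
    have "(L1 * B) $$ (i,j) = (\<Sum>k\<in>{0..<Suc N}. (if k = i then 1 else if Suc k = i then -t else 0) * B $$ (k,j))"
      using i j by (auto simp: L1_def B_def scalar_prod_def intro!: sum.cong)
    also have "\<dots> = B $$ (i,j) + (if 0 < i then -t * B $$ (i - 1, j) else 0)"
      by (rule sum_two_l[OF i])
    finally show ?thesis .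
  qed
  have NN: "N < Suc N" by simp
  have "det (L1 * B) = (L1 * B) $$ (0, N) * cofactor (L1 * B) 0 N"
  proof (rule det_single_col[OF _ NN])
    fix i' assume i': "i' < Suc N" "i' \<noteq> 0"
    then show "(L1 * B) $$ (i', N) = 0" unfolding L1B[OF i'(1) NN]
      by (cases i') (auto simp: B_def)
  qed (use L1c Bc in auto)
  also have "(L1 * B) $$ (0, N) = 1" using L1B[of 0 N] by (simp add: B_def)
  also have "cofactor (L1 * B) 0 N = (-1)^N * hur h' N"
  proof -
    have "mat_delete (L1 * B) 0 N = mat N N (\<lambda>(i,j). cf h' (2 * int j - int i + 1))"
    proof (rule eq_matI)
      fix i j assume "i < dim_row (mat N N (\<lambda>(i,j). cf h' (2 * int j - int i + 1)))"
        "j < dim_col (mat N N (\<lambda>(i,j). cf h' (2 * int j - int i + 1)))"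
      hence i: "i < N" and j: "j < N" by auto
      have "mat_delete (L1 * B) 0 N $$ (i,j) = (L1 * B) $$ (Suc i, j)"
        using i j L1c Bc by (auto simp: mat_delete_def)
      also have "\<dots> = cf h (2 * int j - int (Suc i) + 1) - t * cf h (2 * int j - int i + 1)"
        using i j by (subst L1B) (auto simp: B_def)
      also have "\<dots> = cf h' (2 * int j - int i + 1)"
        unfolding h'_def cf_lin by (simp add: algebra_simps)
      finally show "mat_delete (L1 * B) 0 N $$ (i,j) = mat N N (\<lambda>(i,j). cf h' (2 * int j - int i + 1)) $$ (i,j)"
        using i j by simp
    qed (use L1c Bc in auto)
    then show ?thesis unfolding cofactor_def hur_def by simp
  qed
  finally have r1: "det B = (-1)^N * hur h' N"
    using det_mult[OF L1c Bc] detL1 by simp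
  have L2B_top: "(L2 * B) $$ (i,j) = B $$ (i,j)" if i: "i < N" and j: "j < Suc N" for i j
  proof -
    have "(L2 * B) $$ (i,j) = (\<Sum>k\<in>{0..<Suc N}. (if k = i then 1 else 0) * B $$ (k,j))"
      using i j Bc by (auto simp: L2_def scalar_prod_def intro!: sum.cong)
    also have "\<dots> = (\<Sum>k\<in>{0..<Suc N}. (if k = i then B $$ (k,j) else 0))"
      by (rule sum.cong) auto
    also have "\<dots> = B $$ (i,j)" using i by (simp add: sum.delta)
    finally show ?thesis .
  qed
  have L2B_bot: "(L2 * B) $$ (N,j) = (\<Sum>k\<in>{0..N}. (-1)^k * coeff h k * B $$ (k,j))" if j: "j < Suc N" for j
  proof -
    have "(L2 * B) $$ (N,j) = (\<Sum>k\<in>{0..<Suc N}. (-1)^k * coeff h k * B $$ (k,j))"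
      using j by (auto simp: L2_def B_def scalar_prod_def intro!: sum.cong)
    also have "{0..<Suc N} = {0..N}" by auto
    finally show ?thesis .
  qed
  have "det (L2 * B) = (L2 * B) $$ (N, N) * cofactor (L2 * B) N N"
  proof (rule det_single_row[OF _ NN NN])
    fix j' assume j': "j' < Suc N" "j' \<noteq> N"
    have "(\<Sum>k\<in>{0..N}. (-1)^k * coeff h k * B $$ (k,j')) = (\<Sum>k\<in>{0..N}. (-1)^k * coeff h k * cf h (int (2 * j' + 1) - int k))"
      using j' by (intro sum.cong) (auto simp: B_def algebra_simps)
    also have "\<dots> = 0" by (rule key_sum) (use dh in auto)
    finally show "(L2 * B) $$ (N, j') = 0" unfolding L2B_bot[OF j'(1)] .
  qed (use L2c Bc in auto)
  also have "(L2 * B) $$ (N, N) = poly h (-t)"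
  proof -
    have "(L2 * B) $$ (N, N) = (\<Sum>k\<in>{0..N}. (-1)^k * coeff h k * t^k)"
      unfolding L2B_bot[OF NN] by (intro sum.cong) (auto simp: B_def)
    also have "\<dots> = (\<Sum>k\<le>degree h. coeff h k * (-t)^k)"
      unfolding dh atMost_atLeast0 by (intro sum.cong) (auto simp: power_minus')
    also have "\<dots> = poly h (-t)" by (simp add: poly_altdef)
    finally show ?thesis .
  qed
  also have "cofactor (L2 * B) N N = hur h N"
  proof -
    have "mat_delete (L2 * B) N N = mat N N (\<lambda>(i,j). cf h (2 * int j - int i + 1))"
    proof (rule eq_matI)
      fix i j assume "i < dim_row (mat N N (\<lambda>(i,j). cf h (2 * int j - int i + 1)))"
        "j < dim_col (mat N N (\<lambda>(i,j). cf h (2 * int j - int i + 1)))"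
      hence i: "i < N" and j: "j < N" by auto
      have "mat_delete (L2 * B) N N $$ (i,j) = (L2 * B) $$ (i, j)"
        using i j L2c Bc by (auto simp: mat_delete_def)
      also have "\<dots> = cf h (2 * int j - int i + 1)"
        using i j by (subst L2B_top) (auto simp: B_def)
      finally show "mat_delete (L2 * B) N N $$ (i,j) = mat N N (\<lambda>(i,j). cf h (2 * int j - int i + 1)) $$ (i,j)"
        using i j by simp
    qed (use L2c Bc in auto)
    then show ?thesis unfolding cofactor_def hur_def by (simp add: power_add[symmetric] mult_2[symmetric])
  qed
  finally have r2: "(-1)^N * det B = poly h (-t) * hur h N"
    using det_mult[OF L2c Bc] detL2 by simp
  have "hur h' N = (-1)^N * (-1)^N * hur h' N" by (simp add: power_add[symmetric] mult_2[symmetric])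
  also have "\<dots> = poly h (-t) * hur h N" using r1 r2 by (simp add: mult.assoc)
  also have "\<dots> = poly h (-t) * hur h (N - 1)" using hur_drop[OF dh lc N] by simp
  finally show ?thesis unfolding h'_def .
qed


definition pairs :: "nat set \<Rightarrow> (nat \<times> nat) set" where
  "pairs I = {(i,j). i \<in> I \<and> j \<in> I \<and> i < j}"

lemma pairs_insert:
  assumes "x \<notin> F"
  shows "pairs (insert x F) = pairs F \<union> (\<lambda>j. (min x j, max x j)) ` F"
proof (rule Set.set_eqI, rule iffI)
  fix p assume p: "p \<in> pairs (insert x F)"
  then obtain a b where ab: "p = (a,b)" "a \<in> insert x F" "b \<in> insert x F" "a < b"
    unfolding pairs_def by auto
  consider "a = x" | "b = x" | "a \<noteq> x" "b \<noteq> x" by blast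
  then show "p \<in> pairs F \<union> (\<lambda>j. (min x j, max x j)) ` F"
  proof cases
    case 1
    then have "b \<in> F" "p = (min x b, max x b)" using ab by auto
    then show ?thesis by blast
  next
    case 2
    then have "a \<in> F" "p = (min x a, max x a)" using ab by auto
    then show ?thesis by blast
  next
    case 3
    then show ?thesis using ab unfolding pairs_def by auto
  qed
next
  fix p assume "p \<in> pairs F \<union> (\<lambda>j. (min x j, max x j)) ` F"
  then show "p \<in> pairs (insert x F)"
  proof
    assume "p \<in> pairs F" then show ?thesis unfolding pairs_def by auto
  next
    assume "p \<in> (\<lambda>j. (min x j, max x j)) ` F"
    then obtain j where j: "j \<in> F" "p = (min x j, max x j)" by auto
    then have "x \<noteq> j" using assms by auto
    then show ?thesis using j unfolding pairs_def by (auto simp: min_def max_def)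
  qed
qed

lemma hur_prod:
  fixes s :: "nat \<Rightarrow> complex"
  assumes "finite I" "I \<noteq> {}"
  shows "hur (\<Prod>i\<in>I. [:- s i, 1:]) (card I - 1) = (\<Prod>p\<in>pairs I. - s (fst p) - s (snd p))"
  using assms
proof (induction I rule: finite_ne_induct)
  case (singleton x)
  have "pairs {x} = {}" by (auto simp: pairs_def)
  then show ?case by (simp add: hur_def)
next
  case (insert x F)
  define h where "h = (\<Prod>i\<in>F. [:- s i, 1:])"
  define N where "N = card F"
  have N: "N \<ge> 1" using insert unfolding N_def by (simp add: Suc_leI card_gt_0_iff)
  have dh: "degree h = N" unfolding h_def N_def by (rule degree_lin_prod[OF insert(1)])
  have "lead_coeff h = 1" unfolding h_def lead_coeff_prod by simp
  then have lc: "coeff h N = 1" using dh by simp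
  have "hur (\<Prod>i\<in>insert x F. [:- s i, 1:]) (card (insert x F) - 1) = hur ([:- s x, 1:] * h) N"
    using insert unfolding h_def N_def by simp
  also have "\<dots> = poly h (- s x) * hur h (N - 1)" by (rule hur_step[OF dh lc N])
  also have "hur h (N - 1) = (\<Prod>p\<in>pairs F. - s (fst p) - s (snd p))" using insert unfolding h_def N_def by simp
  also have "poly h (- s x) = (\<Prod>j\<in>F. - s x - s j)" unfolding h_def poly_prod by (intro prod.cong) auto
  also have "(\<Prod>j\<in>F. - s x - s j) = (\<Prod>p\<in>(\<lambda>j. (min x j, max x j)) ` F. - s (fst p) - s (snd p))"
  proof -
    have inj: "inj_on (\<lambda>j. (min x j, max x j)) F"
      using insert(3) by (auto simp: inj_on_def min_def max_def split: if_splits)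
    show ?thesis
      by (subst prod.reindex[OF inj]) (auto simp: min_def max_def intro!: prod.cong)
  qed
  also have "(\<Prod>p\<in>(\<lambda>j. (min x j, max x j)) ` F. - s (fst p) - s (snd p)) * (\<Prod>p\<in>pairs F. - s (fst p) - s (snd p))
     = (\<Prod>p\<in>pairs (insert x F). - s (fst p) - s (snd p))"
  proof -
    have "pairs F \<subseteq> F \<times> F" by (auto simp: pairs_def)
    then have fin: "finite (pairs F)" using insert(1) by (meson finite_SigmaI finite_subset)
    have disj: "pairs F \<inter> (\<lambda>j. (min x j, max x j)) ` F = {}"
      using insert(3) by (auto simp: pairs_def min_def max_def split: if_splits)
    show ?thesis unfolding pairs_insert[OF insert(3)]
      by (subst prod.union_disjoint[OF fin _ disj]) (use insert(1) in auto)
  qed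
  finally show ?case by simp
qed


lemma higher_pderiv_pcompose_lin:
  "(pderiv ^^ m) (p \<circ>\<^sub>p [:c,1:]) = ((pderiv ^^ m) p) \<circ>\<^sub>p [:c, 1:]"
  by (induction m) (auto simp: pderiv_pcompose pderiv_pCons)

lemma taylor_coeff:
  fixes f :: "complex poly"
  shows "poly ((pderiv ^^ m) f) x = fact m * coeff (f \<circ>\<^sub>p [:x,1:]) m"
proof -
  define g where "g = f \<circ>\<^sub>p [:x,1:]"
  have "[:x,1:] \<circ>\<^sub>p [:-x,1:] = [:0, 1::complex:]" by (simp add: pcompose_pCons)
  then have f: "f = g \<circ>\<^sub>p [:-x,1:]" unfolding g_def pcompose_assoc[symmetric] by simp
  have "poly ((pderiv ^^ m) f) x = poly ((pderiv ^^ m) g) 0"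
    unfolding f higher_pderiv_pcompose_lin poly_pcompose by simp
  also have "\<dots> = pochhammer (of_nat (Suc 0)) m * coeff g m"
    by (simp add: poly_0_coeff_0 coeff_higher_pderiv)
  also have "\<dots> = fact m * coeff g m" by (simp add: pochhammer_fact)
  finally show ?thesis unfolding g_def .
qed

lemma Mentry_phi: "Mentry f (Suc i) (Suc j) = phi f (2 * int j - int i + 2)"
proof (cases "odd (Suc i)")
  case True
  then have "(Suc i + 1) div 2 * 2 = i + 2" by presburger
  then have "int ((Suc i + 1) div 2) * 2 = int i + 2" by (metis of_nat_add of_nat_mult of_nat_numeral)
  then show ?thesis using True unfolding Mentry_def by (simp add: algebra_simps)
next
  case False
  note c = this
  then have "Suc i div 2 * 2 = i + 1" by presburger
  then have "int (Suc i div 2) * 2 = int i + 1" by (metis of_nat_add of_nat_mult of_nat_numeral of_nat_1)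
  moreover obtain D where D: "D = int (Suc i div 2)" by simp
  ultimately have "D * 2 = int i + 1" by simp
  then have "2 * (int (Suc j) - D) + 1 = 2 * int j - int i + 2" by simp
  then have e: "2 * (int (Suc j) - int (Suc i div 2)) + 1 = 2 * int j - int i + 2" unfolding D .
  have "Mentry f (Suc i) (Suc j) = phi f (2 * (int (Suc j) - int (Suc i div 2)) + 1)"
    by (simp only: Mentry_def c if_False)
  then show ?thesis unfolding e .
qed

lemma minor_eval:
  fixes r :: "nat \<Rightarrow> complex"
  assumes f: "f = (\<Prod>i\<in>{1..n}. [:- r i, 1:])" and k: "k \<in> {1..n}"
  shows "poly (leading_minor f K) (r k) = hur (\<Prod>i\<in>{1..n} - {k}. [:- (r i - r k), 1:]) K"
proof -
  define hk where "hk = (\<Prod>i\<in>{1..n} - {k}. [:- (r i - r k), 1:])"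
  have df: "degree f = n" unfolding f by (simp add: degree_lin_prod)
  have dhk: "degree hk = n - 1" unfolding hk_def using k
    by (subst degree_prod_sum_eq) auto
  have comp: "f \<circ>\<^sub>p [:r k, 1:] = [:0,1:] * hk"
  proof -
    have "f \<circ>\<^sub>p [:r k, 1:] = (\<Prod>i\<in>{1..n}. [:r k - r i, 1:])"
      unfolding f pcompose_prod by (intro prod.cong) (auto simp: pcompose_pCons)
    also have "\<dots> = [:r k - r k, 1:] * (\<Prod>i\<in>{1..n} - {k}. [:r k - r i, 1:])"
      using k by (subst prod.remove) auto
    also have "(\<Prod>i\<in>{1..n} - {k}. [:r k - r i, 1:]) = hk"
      unfolding hk_def by (intro prod.cong) auto
    finally show ?thesis by simp
  qed
  have phi_eval: "poly (phi f z) (r k) = cf hk (z - 1)" for z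
  proof -
    consider "z < 1" | "1 \<le> z" "z \<le> int n" | "z > int n" by linarith
    then show ?thesis
    proof cases
      case 1 then show ?thesis by (simp add: phi_def cf_def)
    next
      case 2
      then have "nat z = Suc (nat (z - 1))" by auto
      then have "coeff (f \<circ>\<^sub>p [:r k, 1:]) (nat z) = coeff hk (nat (z - 1))"
        unfolding comp by (simp add: coeff_pCons')
      then show ?thesis using 2 df by (simp add: phi_def cf_def taylor_coeff)
    next
      case 3
      then have "nat (z - 1) \<ge> n" by auto
      then have "coeff hk (nat (z - 1)) = 0" using dhk k by (intro coeff_eq_0) auto
      then show ?thesis using 3 df by (simp add: phi_def cf_def)
    qed
  qed
  have "poly (leading_minor f K) (r k)
      = det (map_mat (\<lambda>p. poly p (r k)) (mat K K (\<lambda>(i, j). Mentry f (i + 1) (j + 1))))"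
    unfolding leading_minor_def by (simp add: comm_ring_hom.hom_det[OF poly_hom.comm_ring_hom_axioms])
  also have "map_mat (\<lambda>p. poly p (r k)) (mat K K (\<lambda>(i, j). Mentry f (i + 1) (j + 1)))
     = mat K K (\<lambda>(i,j). cf hk (2 * int j - int i + 1))"
    by (rule eq_matI) (auto simp: Mentry_phi phi_eval algebra_simps)
  finally show ?thesis unfolding hur_def hk_def .
qed


theorem theorem2:
  fixes n :: nat and f :: "complex poly" and r :: "nat \<Rightarrow> complex"
  assumes "n \<ge> 3"
    and "f = (\<Prod>i\<in>{1..n}. [:- r i, 1:])"
  shows "(\<Prod>(i, j, k) \<in> {(i, j, k). i \<in> {1..n} \<and> j \<in> {1..n} \<and> k \<in> {1..n}
            \<and> i < j \<and> j \<noteq> k \<and> k \<noteq> i}. 2 * r k - r i - r j)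
         = resultant f (leading_minor f (n - 2))"
proof -
  define K where "K = {1..n}"
  define H where "H = leading_minor f (n - 2)"
  define g where "g = (\<lambda>k p. 2 * r k - r (fst p) - r (snd p))"
  have finK: "finite K" unfolding K_def by simp
  have finA: "finite (pairs (K - {k}))" for k
  proof -
    have "pairs (K - {k}) \<subseteq> K \<times> K" by (auto simp: pairs_def)
    then show ?thesis using finK by (meson finite_SigmaI finite_subset)
  qed
  have eval: "poly H (r k) = (\<Prod>p\<in>pairs (K - {k}). g k p)" if k: "k \<in> K" for k
  proof -
    have cK: "card (K - {k}) - 1 = n - 2" using k unfolding K_def by simp
    have ne: "K - {k} \<noteq> {}"
    proof -
      have c2: "card (K - {k}) \<ge> 2" using k assms(1) unfolding K_def by simp
      show ?thesis
      proof
        assume "K - {k} = {}"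
        then have "card (K - {k}) = 0" by (simp only: card.empty)
        with c2 show False by simp
      qed
    qed
    have "poly H (r k) = hur (\<Prod>i\<in>K - {k}. [:- (r i - r k), 1:]) (card (K - {k}) - 1)"
      using minor_eval[OF assms(2), of k "n - 2"] k cK unfolding H_def K_def by simp
    also have "\<dots> = (\<Prod>p\<in>pairs (K - {k}). - (r (fst p) - r k) - (r (snd p) - r k))"
      by (rule hur_prod[of "K - {k}" "\<lambda>i. r i - r k"]) (use finK ne in auto)
    also have "\<dots> = (\<Prod>p\<in>pairs (K - {k}). g k p)"
      unfolding g_def by (intro prod.cong) (auto simp: algebra_simps)
    finally show ?thesis .
  qed
  have "resultant f H = (\<Prod>k\<in>K. poly H (r k))"
    unfolding assms(2) K_def by (rule resultant_lin_prod) simp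
  also have "\<dots> = (\<Prod>k\<in>K. \<Prod>p\<in>pairs (K - {k}). g k p)"
    using eval by (intro prod.cong) auto
  also have "\<dots> = (\<Prod>x\<in>(SIGMA k:K. pairs (K - {k})). g (fst x) (snd x))"
    by (subst prod.Sigma[OF finK]) (use finA in \<open>auto simp: case_prod_beta\<close>)
  also have "\<dots> = (\<Prod>(i, j, k) \<in> {(i, j, k). i \<in> {1..n} \<and> j \<in> {1..n} \<and> k \<in> {1..n}
            \<and> i < j \<and> j \<noteq> k \<and> k \<noteq> i}. 2 * r k - r i - r j)"
  proof -
    have T: "{(i, j, k). i \<in> {1..n} \<and> j \<in> {1..n} \<and> k \<in> {1..n} \<and> i < j \<and> j \<noteq> k \<and> k \<noteq> i}
      = (\<lambda>x. (fst (snd x), snd (snd x), fst x)) ` (SIGMA k:K. pairs (K - {k}))"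
      unfolding K_def pairs_def by (auto simp: image_iff)
    have inj: "inj_on (\<lambda>x. (fst (snd x), snd (snd x), fst x)) (SIGMA k:K. pairs (K - {k}))"
      by (auto simp: inj_on_def)
    show ?thesis unfolding T
      by (subst prod.reindex[OF inj]) (auto simp: g_def case_prod_beta intro!: prod.cong)
  qed
  finally show ?thesis unfolding H_def by simp
qed

end
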